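(* Let $Q$ be a quiver and $C$ a monomial admissible subcoalgebra of $kQ$. If there is a path $p\in C$ of positive length such that $p\beta\notin C$ for every arrow $\beta$ of $Q$ (or such that $\beta p\notin C$ for every arrow $\beta$), then $C$ is not semiprime. In particular, if there is an arrow $\alpha$ such that no arrow $\beta$ satisfies $\beta\alpha\in C$ (or no arrow $\beta$ satisfies $\alpha\beta\in C$), then $C$ is not semiprime. *)

theory Defs
  imports Main
begin

text \<open>Quiver Q = (vertices 'v, arrows 'e, source map s, target map t).
  A path is a pair (start vertex, list of arrows); the empty list is the trivial path e_v.\<close>

fun chain :: "('e \<Rightarrow> 'v) \<Rightarrow> ('e \<Rightarrow> 'v) \<Rightarrow> 'v \<Rightarrow> 'e list \<Rightarrow> bool" where
  "chain s t v [] = True"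
| "chain s t v (a # as) = (s a = v \<and> chain s t (t a) as)"

fun endv :: "('e \<Rightarrow> 'v) \<Rightarrow> 'v \<Rightarrow> 'e list \<Rightarrow> 'v" where
  "endv t v [] = v"
| "endv t v (a # as) = endv t (t a) as"

definition is_path :: "('e \<Rightarrow> 'v) \<Rightarrow> ('e \<Rightarrow> 'v) \<Rightarrow> 'v \<times> 'e list \<Rightarrow> bool" where
  "is_path s t p = chain s t (fst p) (snd p)"

definition path_len :: "'v \<times> 'e list \<Rightarrow> nat" where
  "path_len p = length (snd p)"

definition arrow_path :: "('e \<Rightarrow> 'v) \<Rightarrow> 'e \<Rightarrow> 'v \<times> 'e list" where
  "arrow_path s a = (s a, [a])"

definition composable :: "('e \<Rightarrow> 'v) \<Rightarrow> 'v \<times> 'e list \<Rightarrow> 'v \<times> 'e list \<Rightarrow> bool" where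
  "composable t p q = (endv t (fst p) (snd p) = fst q)"

definition pconcat :: "'v \<times> 'e list \<Rightarrow> 'v \<times> 'e list \<Rightarrow> 'v \<times> 'e list" where
  "pconcat p q = (fst p, snd p @ snd q)"

text \<open>The path coalgebra kQ: finitely supported k-valued functions on paths
  (coordinates w.r.t. the basis of paths).\<close>
definition path_space :: "('e \<Rightarrow> 'v) \<Rightarrow> ('e \<Rightarrow> 'v) \<Rightarrow> ('v \<times> 'e list \<Rightarrow> 'k::field) set" where
  "path_space s t = {x. finite {p. x p \<noteq> 0} \<and> (\<forall>p. x p \<noteq> 0 \<longrightarrow> is_path s t p)}"

definition bvec :: "'v \<times> 'e list \<Rightarrow> 'v \<times> 'e list \<Rightarrow> 'k::field" where
  "bvec p = (\<lambda>q. if q = p then 1 else 0)"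

text \<open>Comultiplication Delta(p) = sum over p = q r of q (x) r, in coordinates of
  kQ (x) kQ (finitely supported functions on pairs of paths).\<close>
definition comult :: "('e \<Rightarrow> 'v) \<Rightarrow> ('e \<Rightarrow> 'v) \<Rightarrow> ('v \<times> 'e list \<Rightarrow> 'k::field)
    \<Rightarrow> ('v \<times> 'e list) \<times> ('v \<times> 'e list) \<Rightarrow> 'k" where
  "comult s t x = (\<lambda>(q, r). if is_path s t q \<and> is_path s t r \<and> composable t q r
                             then x (pconcat q r) else 0)"

definition tensor :: "('v \<times> 'e list \<Rightarrow> 'k::field) set \<Rightarrow> ('v \<times> 'e list \<Rightarrow> 'k) set
    \<Rightarrow> (('v \<times> 'e list) \<times> ('v \<times> 'e list) \<Rightarrow> 'k) set" where
  "tensor C D = {z. \<exists>(n::nat) xs ys. (\<forall>i<n. xs i \<in> C \<and> ys i \<in> D) \<and>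
                    z = (\<lambda>(q, r). \<Sum>i<n. xs i q * ys i r)}"

definition subcoalgebra :: "('e \<Rightarrow> 'v) \<Rightarrow> ('e \<Rightarrow> 'v) \<Rightarrow> ('v \<times> 'e list \<Rightarrow> 'k::field) set \<Rightarrow> bool" where
  "subcoalgebra s t C \<longleftrightarrow>
     C \<subseteq> path_space s t \<and> (\<lambda>_. 0) \<in> C \<and>
     (\<forall>x\<in>C. \<forall>y\<in>C. (\<lambda>p. x p + y p) \<in> C) \<and>
     (\<forall>a. \<forall>x\<in>C. (\<lambda>p. a * x p) \<in> C) \<and>
     (\<forall>x\<in>C. comult s t x \<in> tensor C C)"

definition paths_of :: "('e \<Rightarrow> 'v) \<Rightarrow> ('e \<Rightarrow> 'v) \<Rightarrow> ('v \<times> 'e list \<Rightarrow> 'k::field) set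
    \<Rightarrow> ('v \<times> 'e list) set" where
  "paths_of s t C = {p. is_path s t p \<and> bvec p \<in> C}"

definition monomial :: "('e \<Rightarrow> 'v) \<Rightarrow> ('e \<Rightarrow> 'v) \<Rightarrow> ('v \<times> 'e list \<Rightarrow> 'k::field) set \<Rightarrow> bool" where
  "monomial s t C \<longleftrightarrow>
     C = {x \<in> path_space s t. \<forall>p. x p \<noteq> 0 \<longrightarrow> p \<in> paths_of s t C}"

text \<open>Admissible: kQ_0 + kQ_1 is contained in C.\<close>
definition admissible :: "('e \<Rightarrow> 'v) \<Rightarrow> ('v \<times> 'e list \<Rightarrow> 'k::field) set \<Rightarrow> bool" where
  "admissible s C \<longleftrightarrow> (\<forall>v. bvec (v, []) \<in> C) \<and> (\<forall>a. bvec (arrow_path s a) \<in> C)"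

text \<open>Dual algebra C* of a monomial subcoalgebra C: since C has the basis paths_of C,
  a linear functional on C is the same as a function on paths_of C
  (we extend it by 0).\<close>
definition dual_carrier :: "('e \<Rightarrow> 'v) \<Rightarrow> ('e \<Rightarrow> 'v) \<Rightarrow> ('v \<times> 'e list \<Rightarrow> 'k::field) set
    \<Rightarrow> ('v \<times> 'e list \<Rightarrow> 'k) set" where
  "dual_carrier s t C = {f. \<forall>p. p \<notin> paths_of s t C \<longrightarrow> f p = 0}"

definition conv :: "('e \<Rightarrow> 'v) \<Rightarrow> ('e \<Rightarrow> 'v) \<Rightarrow> ('v \<times> 'e list \<Rightarrow> 'k::field) set
    \<Rightarrow> ('v \<times> 'e list \<Rightarrow> 'k) \<Rightarrow> ('v \<times> 'e list \<Rightarrow> 'k) \<Rightarrow> ('v \<times> 'e list \<Rightarrow> 'k)" where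
  "conv s t C f g = (\<lambda>p. if p \<in> paths_of s t C then
      (\<Sum>i\<in>{0..length (snd p)}. f (fst p, take i (snd p)) *
           g (endv t (fst p) (take i (snd p)), drop i (snd p)))
     else 0)"

definition dual_ideal :: "('e \<Rightarrow> 'v) \<Rightarrow> ('e \<Rightarrow> 'v) \<Rightarrow> ('v \<times> 'e list \<Rightarrow> 'k::field) set
    \<Rightarrow> ('v \<times> 'e list \<Rightarrow> 'k) set \<Rightarrow> bool" where
  "dual_ideal s t C I \<longleftrightarrow>
     I \<subseteq> dual_carrier s t C \<and> (\<lambda>_. 0) \<in> I \<and>
     (\<forall>f\<in>I. \<forall>g\<in>I. (\<lambda>p. f p - g p) \<in> I) \<and>
     (\<forall>f\<in>I. \<forall>g\<in>dual_carrier s t C. conv s t C f g \<in> I \<and> conv s t C g f \<in> I)"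

text \<open>C is semiprime iff its dual algebra C* is semiprime:
  every two-sided ideal I of C* with I I = 0 is zero.\<close>
definition semiprime_monomial :: "('e \<Rightarrow> 'v) \<Rightarrow> ('e \<Rightarrow> 'v) \<Rightarrow> ('v \<times> 'e list \<Rightarrow> 'k::field) set \<Rightarrow> bool" where
  "semiprime_monomial s t C \<longleftrightarrow>
     (\<forall>I. dual_ideal s t C I \<and> (\<forall>f\<in>I. \<forall>g\<in>I. conv s t C f g = (\<lambda>_. 0)) \<longrightarrow> I \<subseteq> {\<lambda>_. 0})"

end

theory Submission
  imports Defs
begin

lemma chain_append: "chain s t v (a @ b) = (chain s t v a \<and> chain s t (endv t v a) b)"
  by (induction a arbitrary: v) auto

lemma mono_supp:
  assumes "monomial s t C" "x \<in> C" "x p \<noteq> 0"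
  shows "p \<in> paths_of s t C"
proof -
  have eq: "C = {x \<in> path_space s t. \<forall>p. x p \<noteq> 0 \<longrightarrow> p \<in> paths_of s t C}"
    using assms(1) unfolding monomial_def .
  have "(x \<in> C) = (x \<in> {x \<in> path_space s t. \<forall>p. x p \<noteq> 0 \<longrightarrow> p \<in> paths_of s t C})"
    using eq by (rule arg_cong)
  with assms(2) have "x \<in> {x \<in> path_space s t. \<forall>p. x p \<noteq> 0 \<longrightarrow> p \<in> paths_of s t C}"
    by (rule iffD1[rotated])
  then show ?thesis using assms(3) by blast
qed

lemma tensor_E:
  assumes "z \<in> tensor C D"
  obtains n :: nat and xs ys where "\<forall>i<n. xs i \<in> C \<and> ys i \<in> D"
    "z = (\<lambda>(u, w). \<Sum>i<n. xs i u * ys i w)"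
  using assms unfolding tensor_def by blast

lemma split_in:
  fixes C :: "('v \<times> 'e list \<Rightarrow> 'k::field) set"
  assumes sc: "subcoalgebra s t C" and mo: "monomial s t C"
    and q: "q \<in> paths_of s t C" and sq: "snd q = a @ b"
  shows "(fst q, a) \<in> paths_of s t C \<and> (endv t (fst q) a, b) \<in> paths_of s t C"
proof -
  have bq: "bvec q \<in> C" using q by (simp add: paths_of_def)
  have pq: "is_path s t q" using q by (simp add: paths_of_def)
  hence ch: "chain s t (fst q) a" "chain s t (endv t (fst q) a) b"
    using sq by (auto simp: is_path_def chain_append)
  from sc bq have "comult s t (bvec q) \<in> tensor C C" by (simp add: subcoalgebra_def)
  then obtain n :: nat and xs ys where xy: "\<forall>i<n. xs i \<in> C \<and> ys i \<in> C"
    and eq: "comult s t (bvec q) = (\<lambda>(u, w). \<Sum>i<n. xs i u * ys i w)"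
    by (rule tensor_E)
  let ?u = "(fst q, a)" and ?w = "(endv t (fst q) a, b)"
  have "comult s t (bvec q :: _ \<Rightarrow> 'k) (?u, ?w) = 1"
    using ch sq unfolding comult_def
    by (simp add: is_path_def composable_def pconcat_def bvec_def prod_eq_iff)
  hence "(\<lambda>(u, w). \<Sum>i<n. xs i u * ys i w) (?u, ?w) = 1" by (simp only: eq)
  hence "(\<Sum>i<n. xs i ?u * ys i ?w) \<noteq> 0" by simp
  then obtain i where "i \<in> {..<n}" "xs i ?u * ys i ?w \<noteq> 0"
    using sum.not_neutral_contains_not_neutral by blast
  hence "xs i \<in> C" "ys i \<in> C" "xs i ?u \<noteq> 0" "ys i ?w \<noteq> 0" using xy by auto
  thus ?thesis using mono_supp[OF mo] by blast
qed

lemma sub_in: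
  assumes sc: "subcoalgebra s t C" and mo: "monomial s t C"
    and q: "q \<in> paths_of s t C" and sq: "snd q = a @ b @ c"
  shows "(endv t (fst q) a, b) \<in> paths_of s t C"
proof -
  have "(endv t (fst q) a, b @ c) \<in> paths_of s t C"
    using split_in[OF sc mo q sq] by blast
  from split_in[OF sc mo this] show ?thesis by simp
qed

lemma path_start: "is_path s t (v, x # xs) \<Longrightarrow> s x = v"
  by (simp add: is_path_def)

lemma sub_right:
  assumes sc: "subcoalgebra s t C" and mo: "monomial s t C"
    and p: "p \<in> paths_of s t C" and pn: "snd p \<noteq> []"
    and q: "q \<in> paths_of s t C" and sq: "snd q = a @ snd p @ \<beta> # c"
  shows "composable t p (arrow_path s \<beta>) \<and> pconcat p (arrow_path s \<beta>) \<in> paths_of s t C"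
proof -
  let ?w = "endv t (fst q) a"
  have sub: "(?w, snd p @ [\<beta>]) \<in> paths_of s t C"
    using sub_in[OF sc mo q, of a "snd p @ [\<beta>]" c] sq by simp
  hence ch: "chain s t ?w (snd p @ [\<beta>])" by (simp add: paths_of_def is_path_def)
  obtain x xs where x: "snd p = x # xs" using pn by (cases "snd p") auto
  have "s x = ?w" using ch x by simp
  moreover have "s x = fst p" using p x by (simp add: paths_of_def is_path_def)
  ultimately have w: "?w = fst p" by simp
  have "s \<beta> = endv t ?w (snd p)" using ch by (simp add: chain_append)
  thus ?thesis using sub w
    by (simp add: composable_def arrow_path_def pconcat_def)
qed

lemma sub_left:
  assumes sc: "subcoalgebra s t C" and mo: "monomial s t C"
    and p: "p \<in> paths_of s t C" and pn: "snd p \<noteq> []"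
    and q: "q \<in> paths_of s t C" and sq: "snd q = a @ \<beta> # snd p @ c"
  shows "composable t (arrow_path s \<beta>) p \<and> pconcat (arrow_path s \<beta>) p \<in> paths_of s t C"
proof -
  let ?w = "endv t (fst q) a"
  have sub: "(?w, \<beta> # snd p) \<in> paths_of s t C"
    using sub_in[OF sc mo q, of a "\<beta> # snd p" c] sq by simp
  hence ch: "chain s t ?w (\<beta> # snd p)" by (simp add: paths_of_def is_path_def)
  obtain x xs where x: "snd p = x # xs" using pn by (cases "snd p") auto
  have "s x = t \<beta>" "s \<beta> = ?w" using ch x by auto
  moreover have "s x = fst p" using p x by (simp add: paths_of_def is_path_def)
  ultimately show ?thesis using sub
    by (simp add: composable_def arrow_path_def pconcat_def)
qed

lemma sum_nz:
  assumes "(\<Sum>i\<in>{0..n::nat}. F i) \<noteq> (0::'k::field)"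
  obtains i where "i \<le> n" "F i \<noteq> 0"
proof -
  obtain i where "i \<in> {0..n}" "F i \<noteq> 0"
    using sum.not_neutral_contains_not_neutral[OF assms] by blast
  thus ?thesis using that by simp
qed

lemma conv_nz:
  assumes "conv s t C f g q \<noteq> 0"
  obtains i where "q \<in> paths_of s t C" "i \<le> length (snd q)"
    "f (fst q, take i (snd q)) \<noteq> 0"
    "g (endv t (fst q) (take i (snd q)), drop i (snd q)) \<noteq> 0"
proof -
  have qC: "q \<in> paths_of s t C" using assms by (auto simp: conv_def split: if_splits)
  hence "(\<Sum>i\<in>{0..length (snd q)}. f (fst q, take i (snd q)) *
           g (endv t (fst q) (take i (snd q)), drop i (snd q))) \<noteq> 0"
    using assms by (simp add: conv_def)
  then obtain i where "i \<le> length (snd q)" "f (fst q, take i (snd q)) *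
           g (endv t (fst q) (take i (snd q)), drop i (snd q)) \<noteq> 0"
    by (rule sum_nz)
  thus ?thesis using that qC by simp
qed

lemma conv_carrier: "conv s t C f g \<in> dual_carrier s t C"
  by (simp add: conv_def dual_carrier_def)

lemma not_semi:
  assumes "dual_ideal s t C I" "\<forall>f\<in>I. \<forall>g\<in>I. conv s t C f g = (\<lambda>_. 0)"
    "(bvec p :: _ \<Rightarrow> 'k::field) \<in> I"
  shows "\<not> semiprime_monomial s t C"
proof -
  have "bvec p p = (1::'k)" by (simp add: bvec_def)
  hence ne: "bvec p \<notin> {(\<lambda>_. 0::'k)}" by auto
  show ?thesis unfolding semiprime_monomial_def
  proof
    assume "\<forall>I. dual_ideal s t C I \<and> (\<forall>f\<in>I. \<forall>g\<in>I. conv s t C f g = (\<lambda>_. 0)) \<longrightarrow> I \<subseteq> {\<lambda>_. 0}"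
    hence "I \<subseteq> {\<lambda>_. 0}" using assms(1,2) by blast
    thus False using ne assms(3) by blast
  qed
qed

lemma diff_nz: "(a::'k::field) - b \<noteq> 0 \<Longrightarrow> a \<noteq> 0 \<or> b \<noteq> 0" by auto

lemma case1:
  assumes sc: "subcoalgebra s t C" and mo: "monomial s t C"
    and p: "p \<in> paths_of s t C" and pn: "snd p \<noteq> []"
    and H: "\<forall>\<beta>. composable t p (arrow_path s \<beta>) \<longrightarrow> pconcat p (arrow_path s \<beta>) \<notin> paths_of s t C"
  shows "\<not> semiprime_monomial s t C"
proof -
  define I where "I = {f. f \<in> dual_carrier s t C \<and> (\<forall>q. f q \<noteq> 0 \<longrightarrow> (\<exists>r. snd q = r @ snd p))}"
  have noext: False if "q \<in> paths_of s t C" "snd q = a @ snd p @ \<beta> # c" for q a \<beta> c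
    using sub_right[OF sc mo p pn that] H by blast
  have R: "conv s t C f g \<in> I" if f: "f \<in> I" for f g
    unfolding I_def
  proof (intro CollectI conjI allI impI conv_carrier)
    fix q assume "conv s t C f g q \<noteq> 0"
    then obtain i where qC: "q \<in> paths_of s t C" and i: "i \<le> length (snd q)"
      and fi: "f (fst q, take i (snd q)) \<noteq> 0" by (rule conv_nz)
    obtain r where r: "take i (snd q) = r @ snd p" using f fi unfolding I_def by force
    show "\<exists>r. snd q = r @ snd p"
    proof (cases "i < length (snd q)")
      case True
      then obtain \<beta> c where "drop i (snd q) = \<beta> # c"
        using Cons_nth_drop_Suc[OF True, symmetric] by blast
      moreover have "snd q = take i (snd q) @ drop i (snd q)" by simp
      ultimately have "snd q = r @ snd p @ \<beta> # c" using r by simp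
      thus ?thesis using noext qC by blast
    next
      case False
      hence "take i (snd q) = snd q" using i by simp
      thus ?thesis using r by (intro exI[of _ r]) simp
    qed
  qed
  have L: "conv s t C g f \<in> I" if f: "f \<in> I" for f g
    unfolding I_def
  proof (intro CollectI conjI allI impI conv_carrier)
    fix q assume "conv s t C g f q \<noteq> 0"
    then obtain i where "f (endv t (fst q) (take i (snd q)), drop i (snd q)) \<noteq> 0" by (rule conv_nz)
    then obtain r where r: "drop i (snd q) = r @ snd p" using f unfolding I_def by force
    show "\<exists>r. snd q = r @ snd p"
    proof (rule exI[of _ "take i (snd q) @ r"])
      have "snd q = take i (snd q) @ drop i (snd q)" by simp
      thus "snd q = (take i (snd q) @ r) @ snd p" using r by simp
    qed
  qed
  have Z: "conv s t C f g = (\<lambda>_. 0)" if f: "f \<in> I" and g: "g \<in> I" for f g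
  proof
    fix q show "conv s t C f g q = 0"
    proof (rule ccontr)
      assume "conv s t C f g q \<noteq> 0"
      then obtain i where qC: "q \<in> paths_of s t C"
        and fi: "f (fst q, take i (snd q)) \<noteq> 0"
        and gi: "g (endv t (fst q) (take i (snd q)), drop i (snd q)) \<noteq> 0" by (rule conv_nz)
      obtain r where r: "take i (snd q) = r @ snd p" using f fi unfolding I_def by force
      obtain r' where r': "drop i (snd q) = r' @ snd p" using g gi unfolding I_def by force
      obtain \<beta> c where "r' @ snd p = \<beta> # c" using pn by (cases "r' @ snd p") auto
      moreover have "snd q = take i (snd q) @ drop i (snd q)" by simp
      ultimately have "snd q = r @ snd p @ \<beta> # c" using r r' by simp
      thus False using noext qC by blast
    qed
  qed
  have DI: "dual_ideal s t C I"
    unfolding dual_ideal_def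
  proof (intro conjI ballI)
    show "I \<subseteq> dual_carrier s t C" unfolding I_def by blast
    show "(\<lambda>_. 0) \<in> I" unfolding I_def dual_carrier_def by simp
    fix f assume f: "f \<in> I"
    { fix g assume g: "g \<in> I"
      show "(\<lambda>p. f p - g p) \<in> I" unfolding I_def dual_carrier_def
      proof (intro CollectI conjI allI impI)
        fix q assume "q \<notin> paths_of s t C"
        hence "f q = 0" "g q = 0" using f g unfolding I_def dual_carrier_def by blast+
        thus "f q - g q = 0" by simp
      next
        fix q assume "f q - g q \<noteq> 0"
        hence "f q \<noteq> 0 \<or> g q \<noteq> 0" by (rule diff_nz)
        thus "\<exists>r. snd q = r @ snd p" using f g unfolding I_def by blast
      qed }
    { fix g assume "g \<in> dual_carrier s t C"
      show "conv s t C f g \<in> I" using R f by blast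
      show "conv s t C g f \<in> I" using L f by blast }
  qed
  have "bvec p \<in> I" using p unfolding I_def dual_carrier_def bvec_def by auto
  thus ?thesis using not_semi[OF DI] Z by blast
qed

lemma diff_in:
  fixes f g :: "'a \<Rightarrow> 'k::field"
  assumes "f \<in> {f. f \<in> {f. \<forall>p. p \<notin> S \<longrightarrow> f p = 0} \<and> (\<forall>q. f q \<noteq> 0 \<longrightarrow> P q)}"
    and "g \<in> {f. f \<in> {f. \<forall>p. p \<notin> S \<longrightarrow> f p = 0} \<and> (\<forall>q. f q \<noteq> 0 \<longrightarrow> P q)}"
  shows "(\<lambda>p. f p - g p) \<in> {f. f \<in> {f. \<forall>p. p \<notin> S \<longrightarrow> f p = 0} \<and> (\<forall>q. f q \<noteq> 0 \<longrightarrow> P q)}"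
proof -
  have "f q - g q \<noteq> 0 \<Longrightarrow> f q \<noteq> 0 \<or> g q \<noteq> 0" for q by auto
  hence "f q \<noteq> g q \<Longrightarrow> P q" for q using assms by (cases "f q = 0") auto
  thus ?thesis using assms by auto
qed

lemma case2:
  assumes sc: "subcoalgebra s t C" and mo: "monomial s t C"
    and p: "p \<in> paths_of s t C" and pn: "snd p \<noteq> []"
    and H: "\<forall>\<beta>. composable t (arrow_path s \<beta>) p \<longrightarrow> pconcat (arrow_path s \<beta>) p \<notin> paths_of s t C"
  shows "\<not> semiprime_monomial s t C"
proof -
  define I where "I = {f. f \<in> dual_carrier s t C \<and> (\<forall>q. f q \<noteq> 0 \<longrightarrow> fst q = fst p \<and> (\<exists>r. snd q = snd p @ r))}"
  have noext: False if "q \<in> paths_of s t C" "snd q = a @ \<beta> # snd p @ c" for q a \<beta> c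
    using sub_left[OF sc mo p pn that] H by blast
  have R: "conv s t C f g \<in> I" if f: "f \<in> I" for f g
    unfolding I_def
  proof (rule CollectI, rule conjI[OF conv_carrier], intro allI impI)
    fix q assume "conv s t C f g q \<noteq> 0"
    then obtain i where fi: "f (fst q, take i (snd q)) \<noteq> 0" by (rule conv_nz)
    have "fst (fst q, take i (snd q)) = fst p \<and> (\<exists>r. snd (fst q, take i (snd q)) = snd p @ r)"
      using f fi unfolding I_def by blast
    then obtain r where r: "take i (snd q) = snd p @ r" and v: "fst q = fst p" by auto
    have "snd q = take i (snd q) @ drop i (snd q)" by simp
    hence "snd q = snd p @ (r @ drop i (snd q))" using r by simp
    thus "fst q = fst p \<and> (\<exists>r. snd q = snd p @ r)" using v by blast
  qed
  have L: "conv s t C g f \<in> I" if f: "f \<in> I" for f g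
    unfolding I_def
  proof (rule CollectI, rule conjI[OF conv_carrier], intro allI impI)
    fix q assume "conv s t C g f q \<noteq> 0"
    then obtain i where qC: "q \<in> paths_of s t C"
      and fi: "f (endv t (fst q) (take i (snd q)), drop i (snd q)) \<noteq> 0" by (rule conv_nz)
    have "fst (endv t (fst q) (take i (snd q)), drop i (snd q)) = fst p \<and>
       (\<exists>r. snd (endv t (fst q) (take i (snd q)), drop i (snd q)) = snd p @ r)"
      using f fi unfolding I_def by blast
    then obtain r where r: "drop i (snd q) = snd p @ r" and v: "endv t (fst q) (take i (snd q)) = fst p" by auto
    show "fst q = fst p \<and> (\<exists>r. snd q = snd p @ r)"
    proof (cases "take i (snd q) = []")
      case True
      hence "drop i (snd q) = snd q" by (metis append_Nil append_take_drop_id)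
      hence "fst q = fst p" "snd q = snd p @ r" using True r v by auto
      thus ?thesis by blast
    next
      case False
      then obtain a \<beta> where ab: "take i (snd q) = a @ [\<beta>]" by (cases "take i (snd q)" rule: rev_cases) auto
      have "snd q = take i (snd q) @ drop i (snd q)" by simp
      hence "snd q = a @ \<beta> # snd p @ r" using ab r by simp
      thus ?thesis using noext qC by blast
    qed
  qed
  have Z: "conv s t C f g = (\<lambda>_. 0)" if f: "f \<in> I" and g: "g \<in> I" for f g
  proof
    fix q show "conv s t C f g q = 0"
    proof (rule ccontr)
      assume "conv s t C f g q \<noteq> 0"
      then obtain i where qC: "q \<in> paths_of s t C"
        and fi: "f (fst q, take i (snd q)) \<noteq> 0"
        and gi: "g (endv t (fst q) (take i (snd q)), drop i (snd q)) \<noteq> 0" by (rule conv_nz)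
      have "\<exists>r. snd (fst q, take i (snd q)) = snd p @ r" using f fi unfolding I_def by blast
      then obtain r where r: "take i (snd q) = snd p @ r" by auto
      have "\<exists>r. snd (endv t (fst q) (take i (snd q)), drop i (snd q)) = snd p @ r"
        using g gi unfolding I_def by blast
      then obtain r' where r': "drop i (snd q) = snd p @ r'" by auto
      have "take i (snd q) \<noteq> []" using r pn by simp
      then obtain a \<beta> where ab: "take i (snd q) = a @ [\<beta>]" by (cases "take i (snd q)" rule: rev_cases) auto
      have "snd q = take i (snd q) @ drop i (snd q)" by simp
      hence "snd q = a @ \<beta> # snd p @ r'" using ab r' by simp
      thus False using noext qC by blast
    qed
  qed
  have DI: "dual_ideal s t C I"
    unfolding dual_ideal_def
  proof (intro conjI ballI)
    show "I \<subseteq> dual_carrier s t C" unfolding I_def by blast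
    show "(\<lambda>_. 0) \<in> I" unfolding I_def dual_carrier_def by simp
    fix f assume f: "f \<in> I"
    { fix g assume g: "g \<in> I"
      show "(\<lambda>p. f p - g p) \<in> I" using f g unfolding I_def dual_carrier_def by (rule diff_in) }
    { fix g assume "g \<in> dual_carrier s t C"
      show "conv s t C f g \<in> I" using R f by blast
      show "conv s t C g f \<in> I" using L f by blast }
  qed
  have "bvec p \<in> I" using p unfolding I_def dual_carrier_def bvec_def by auto
  thus ?thesis using not_semi[OF DI] Z by blast
qed

theorem mainTheorem20:
  fixes s t :: "'e \<Rightarrow> 'v" and C :: "('v \<times> 'e list \<Rightarrow> 'k::field) set"
  assumes "subcoalgebra s t C" and "monomial s t C" and "admissible s C"
  shows "((\<exists>p \<in> paths_of s t C. path_len p > 0 \<and>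
            ((\<forall>\<beta>. composable t p (arrow_path s \<beta>) \<longrightarrow> pconcat p (arrow_path s \<beta>) \<notin> paths_of s t C) \<or>
             (\<forall>\<beta>. composable t (arrow_path s \<beta>) p \<longrightarrow> pconcat (arrow_path s \<beta>) p \<notin> paths_of s t C)))
          \<longrightarrow> \<not> semiprime_monomial s t C)
       \<and> ((\<exists>\<alpha>. (\<forall>\<beta>. composable t (arrow_path s \<beta>) (arrow_path s \<alpha>) \<longrightarrow>
                      pconcat (arrow_path s \<beta>) (arrow_path s \<alpha>) \<notin> paths_of s t C) \<or>
                (\<forall>\<beta>. composable t (arrow_path s \<alpha>) (arrow_path s \<beta>) \<longrightarrow>
                      pconcat (arrow_path s \<alpha>) (arrow_path s \<beta>) \<notin> paths_of s t C))
          \<longrightarrow> \<not> semiprime_monomial s t C)"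
proof -
  have P1: "\<not> semiprime_monomial s t C" if "p \<in> paths_of s t C" "path_len p > 0"
    "(\<forall>\<beta>. composable t p (arrow_path s \<beta>) \<longrightarrow> pconcat p (arrow_path s \<beta>) \<notin> paths_of s t C) \<or>
     (\<forall>\<beta>. composable t (arrow_path s \<beta>) p \<longrightarrow> pconcat (arrow_path s \<beta>) p \<notin> paths_of s t C)" for p
  proof -
    have pn: "snd p \<noteq> []" using that(2) by (simp add: path_len_def)
    show ?thesis using that(3) case1[OF assms(1,2) that(1) pn] case2[OF assms(1,2) that(1) pn] by blast
  qed
  have A: "arrow_path s \<alpha> \<in> paths_of s t C" for \<alpha>
    using assms(3) unfolding admissible_def paths_of_def
    by (simp add: is_path_def arrow_path_def)
  have "path_len (arrow_path s \<alpha>) > 0" for \<alpha> by (simp add: path_len_def arrow_path_def)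
  thus ?thesis using P1 A by blast
qed

end
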